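(* Suppose the undirected graph $\Gamma^u$ underlying the Hasse diagram $\Gamma$ of $\rho$ is a single cycle and $\Gamma$ has at least two vertices at which both adjacent arrows terminate. Then for every nontrivial group $G$ there exists a transitive function $u:\rho\to G$ that is not trivial. In particular, for the structural matrix algebra $$\begin{pmatrix}k&0&k&k\\0&k&k&k\\0&0&k&0\\0&0&0&k\end{pmatrix}$$ (i.e. $M(\rho,k)$ for $\rho$ on $\{1,2,3,4\}$ generated by $1\rho3,1\rho4,2\rho3,2\rho4$) and any nontrivial group $G$, there is a good $G$-grading that does not arise from a $G$-graded $\rho$-flag, i.e. for which there are no $g_1,\dots,g_4\in G$ with $\deg e_{ij}=g_ig_j^{-1}$ for all $i\rho j$.
   Context: $\rho$ is a preorder on a finite set $\{1,\dots,n\}$; $\mathcal C$ the poset of its equivalence classes ($i\sim j$ iff $i\rho j$ and $j\rho i$; $\hat i\le\hat j$ iff $i\rho j$). $\Gamma$ is the directed graph with vertex set $\mathcal C$ and an arrow from $\alpha$ to $\beta$ iff $\alpha<\beta$ with nothing strictly between; $\Gamma^u$ is $\Gamma$ with orientation forgotten. A transitive function on $\rho$ with values in $G$ is $u:\rho\to G$ with $u(i,j)u(j,r)=u(i,r)$ whenever $i\rho j$, $j\rho r$; it is trivial if there are $g_i\in G$ with $u(i,j)=g_ig_j^{-1}$ for all $i\rho j$. $M(\rho,k)$ ($k$ a field) is the algebra of $n\times n$ matrices with $(i,j)$-entry $0$ when $(i,j)\notin\rho$; a good $G$-grading on it is an algebra $G$-grading in which every matrix unit $e_{ij}$, $i\rho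 j$, is homogeneous (equivalently, given by a transitive function $u$ with $\deg e_{ij}=u(i,j)$). *)

theory Defs
  imports "HOL-Algebra.Group"
begin

definition is_preorder_on :: "nat \<Rightarrow> (nat \<times> nat) set \<Rightarrow> bool" where
  "is_preorder_on n rho \<longleftrightarrow>
     rho \<subseteq> {1..n} \<times> {1..n} \<and>
     (\<forall>i\<in>{1..n}. (i, i) \<in> rho) \<and>
     (\<forall>i j r. (i, j) \<in> rho \<longrightarrow> (j, r) \<in> rho \<longrightarrow> (i, r) \<in> rho)"

definition rho_class :: "nat \<Rightarrow> (nat \<times> nat) set \<Rightarrow> nat \<Rightarrow> nat set" where
  "rho_class n rho i = {j \<in> {1..n}. (i, j) \<in> rho \<and> (j, i) \<in> rho}"

definition rho_classes :: "nat \<Rightarrow> (nat \<times> nat) set \<Rightarrow> nat set set" where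
  "rho_classes n rho = rho_class n rho ` {1..n}"

definition cls_le :: "(nat \<times> nat) set \<Rightarrow> nat set \<Rightarrow> nat set \<Rightarrow> bool" where
  "cls_le rho a b \<longleftrightarrow> (\<exists>i\<in>a. \<exists>j\<in>b. (i, j) \<in> rho)"

definition cls_less :: "(nat \<times> nat) set \<Rightarrow> nat set \<Rightarrow> nat set \<Rightarrow> bool" where
  "cls_less rho a b \<longleftrightarrow> cls_le rho a b \<and> a \<noteq> b"

definition hasse_arrow :: "nat \<Rightarrow> (nat \<times> nat) set \<Rightarrow> nat set \<Rightarrow> nat set \<Rightarrow> bool" where
  "hasse_arrow n rho a b \<longleftrightarrow>
     a \<in> rho_classes n rho \<and> b \<in> rho_classes n rho \<and> cls_less rho a b \<and>
     \<not> (\<exists>c\<in>rho_classes n rho. cls_less rho a c \<and> cls_less rho c b)"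

definition hasse_adj :: "nat \<Rightarrow> (nat \<times> nat) set \<Rightarrow> nat set \<Rightarrow> nat set \<Rightarrow> bool" where
  "hasse_adj n rho a b \<longleftrightarrow> hasse_arrow n rho a b \<or> hasse_arrow n rho b a"

definition hasse_is_cycle :: "nat \<Rightarrow> (nat \<times> nat) set \<Rightarrow> bool" where
  "hasse_is_cycle n rho \<longleftrightarrow>
     (\<exists>m v. m \<ge> 3 \<and> bij_betw v {0..<m} (rho_classes n rho) \<and>
        (\<forall>a b. hasse_adj n rho a b \<longleftrightarrow>
                 (\<exists>k<m. {a, b} = {v k, v (Suc k mod m)})))"

definition sink_vertices :: "nat \<Rightarrow> (nat \<times> nat) set \<Rightarrow> nat set set" where
  "sink_vertices n rho =
     {a \<in> rho_classes n rho. \<forall>b. hasse_adj n rho a b \<longrightarrow> hasse_arrow n rho b a}"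

definition transitive_fun ::
  "('g, 'b) monoid_scheme \<Rightarrow> (nat \<times> nat) set \<Rightarrow> (nat \<Rightarrow> nat \<Rightarrow> 'g) \<Rightarrow> bool" where
  "transitive_fun G rho u \<longleftrightarrow>
     (\<forall>i j. (i, j) \<in> rho \<longrightarrow> u i j \<in> carrier G) \<and>
     (\<forall>i j r. (i, j) \<in> rho \<longrightarrow> (j, r) \<in> rho \<longrightarrow> u i j \<otimes>\<^bsub>G\<^esub> u j r = u i r)"

definition trivial_tfun ::
  "('g, 'b) monoid_scheme \<Rightarrow> nat \<Rightarrow> (nat \<times> nat) set \<Rightarrow> (nat \<Rightarrow> nat \<Rightarrow> 'g) \<Rightarrow> bool" where
  "trivial_tfun G n rho u \<longleftrightarrow>
     (\<exists>g. (\<forall>i\<in>{1..n}. g i \<in> carrier G) \<and>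
          (\<forall>i j. (i, j) \<in> rho \<longrightarrow> u i j = g i \<otimes>\<^bsub>G\<^esub> inv\<^bsub>G\<^esub> (g j)))"

definition rho_example :: "(nat \<times> nat) set" where
  "rho_example = {(1,1),(2,2),(3,3),(4,4),(1,3),(1,4),(2,3),(2,4)}"

end

theory Submission imports Defs begin

lemma pre_sub: "is_preorder_on n rho \<Longrightarrow> (i,j)\<in>rho \<Longrightarrow> i\<in>{1..n} \<and> j\<in>{1..n}"
  unfolding is_preorder_on_def by blast
lemma pre_refl: "is_preorder_on n rho \<Longrightarrow> i\<in>{1..n} \<Longrightarrow> (i,i)\<in>rho"
  unfolding is_preorder_on_def by blast
lemma pre_trans: "is_preorder_on n rho \<Longrightarrow> (i,j)\<in>rho \<Longrightarrow> (j,r)\<in>rho \<Longrightarrow> (i,r)\<in>rho"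
  unfolding is_preorder_on_def by blast

lemma class_eq:
  assumes "is_preorder_on n rho" "i\<in>{1..n}" "j\<in>{1..n}"
  shows "rho_class n rho i = rho_class n rho j \<longleftrightarrow> (i,j)\<in>rho \<and> (j,i)\<in>rho"
proof
  assume h: "rho_class n rho i = rho_class n rho j"
  have "j \<in> rho_class n rho j" using assms pre_refl unfolding rho_class_def by auto
  then have "j \<in> rho_class n rho i" using h by simp
  then show "(i,j)\<in>rho \<and> (j,i)\<in>rho" unfolding rho_class_def by auto
next
  assume "(i,j)\<in>rho \<and> (j,i)\<in>rho"
  then show "rho_class n rho i = rho_class n rho j"
    unfolding rho_class_def using pre_trans[OF assms(1)] by blast
qed

lemma cls_le_iff:
  assumes "is_preorder_on n rho" "i\<in>{1..n}" "j\<in>{1..n}"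
  shows "cls_le rho (rho_class n rho i) (rho_class n rho j) \<longleftrightarrow> (i,j)\<in>rho"
proof
  assume "cls_le rho (rho_class n rho i) (rho_class n rho j)"
  then obtain i' j' where "i' \<in> rho_class n rho i" "j' \<in> rho_class n rho j" "(i',j')\<in>rho"
    unfolding cls_le_def by blast
  then show "(i,j)\<in>rho" unfolding rho_class_def using pre_trans[OF assms(1)] by blast
next
  assume "(i,j)\<in>rho"
  moreover have "i \<in> rho_class n rho i" "j \<in> rho_class n rho j"
    using assms pre_refl unfolding rho_class_def by auto
  ultimately show "cls_le rho (rho_class n rho i) (rho_class n rho j)"
    unfolding cls_le_def by blast
qed

locale cyc =
  fixes n :: nat and rho :: "(nat \<times> nat) set" and m :: nat and v :: "nat \<Rightarrow> nat set"
  assumes pre: "is_preorder_on n rho"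
  and m3: "m \<ge> 3"
  and bij: "bij_betw v {0..<m} (rho_classes n rho)"
  and adj: "\<And>a b. hasse_adj n rho a b \<longleftrightarrow> (\<exists>k<m. {a,b} = {v k, v (Suc k mod m)})"
begin

definition rp where "rp k = (SOME i. i \<in> {1..n} \<and> v k = rho_class n rho i)"

lemma rp: assumes "k<m" shows "rp k \<in> {1..n} \<and> v k = rho_class n rho (rp k)"
proof -
  have "v k \<in> rho_classes n rho" using bij assms bij_betw_apply by fastforce
  then obtain i where "i \<in> {1..n} \<and> v k = rho_class n rho i" unfolding rho_classes_def by auto
  then show ?thesis unfolding rp_def by (rule someI)
qed

definition le where "le p q \<longleftrightarrow> (rp p, rp q) \<in> rho"

lemma v_inj: "p<m \<Longrightarrow> q<m \<Longrightarrow> v p = v q \<longleftrightarrow> p = q"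
  using bij_betw_imp_inj_on[OF bij] by (auto simp: inj_on_def)

lemma le_refl: "p<m \<Longrightarrow> le p p" unfolding le_def using rp pre_refl pre by blast
lemma le_trans: "le p q \<Longrightarrow> le q r \<Longrightarrow> le p r" unfolding le_def using pre_trans pre by blast
lemma le_antisym: "p<m \<Longrightarrow> q<m \<Longrightarrow> le p q \<Longrightarrow> le q p \<Longrightarrow> p = q"
proof -
  assume a: "p<m" "q<m" "le p q" "le q p"
  have "v p = v q" using rp[OF a(1)] rp[OF a(2)] class_eq[OF pre] a(3,4) unfolding le_def by simp
  then show "p = q" using v_inj a by simp
qed

lemma C_eq: "rho_classes n rho = v ` {0..<m}" using bij_betw_imp_surj_on[OF bij] by simp
lemma classes_iff: "c \<in> rho_classes n rho \<longleftrightarrow> (\<exists>r<m. c = v r)"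
  unfolding C_eq by auto

lemma cle: "p<m \<Longrightarrow> q<m \<Longrightarrow> cls_le rho (v p) (v q) \<longleftrightarrow> le p q"
  using rp cls_le_iff[OF pre] unfolding le_def by simp

lemma cless: "p<m \<Longrightarrow> q<m \<Longrightarrow> cls_less rho (v p) (v q) \<longleftrightarrow> le p q \<and> p \<noteq> q"
  unfolding cls_less_def using cle v_inj by blast

lemma arrow_iff:
  assumes "p<m" "q<m"
  shows "hasse_arrow n rho (v p) (v q) \<longleftrightarrow> le p q \<and> p \<noteq> q \<and> \<not>(\<exists>r<m. le p r \<and> le r q \<and> r\<noteq>p \<and> r\<noteq>q)"
proof -
  have a: "v p \<in> rho_classes n rho" "v q \<in> rho_classes n rho" using classes_iff assms by auto
  have b: "(\<exists>c\<in>rho_classes n rho. cls_less rho (v p) c \<and> cls_less rho c (v q)) \<longleftrightarrow>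
        (\<exists>r<m. le p r \<and> le r q \<and> r\<noteq>p \<and> r\<noteq>q)"
  proof -
    have "(\<exists>c\<in>rho_classes n rho. cls_less rho (v p) c \<and> cls_less rho c (v q)) \<longleftrightarrow>
       (\<exists>r<m. cls_less rho (v p) (v r) \<and> cls_less rho (v r) (v q))"
      unfolding C_eq by auto
    also have "\<dots> \<longleftrightarrow> (\<exists>r<m. le p r \<and> le r q \<and> r\<noteq>p \<and> r\<noteq>q)"
      using assms by (auto simp: cless)
    finally show ?thesis .
  qed
  have "hasse_arrow n rho (v p) (v q) \<longleftrightarrow> cls_less rho (v p) (v q) \<and>
     \<not>(\<exists>c\<in>rho_classes n rho. cls_less rho (v p) c \<and> cls_less rho c (v q))"
    unfolding hasse_arrow_def using a by blast
  then show ?thesis using b cless assms by blast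
qed

lemma elem_idx: "i\<in>{1..n} \<Longrightarrow> \<exists>k<m. (i, rp k)\<in>rho \<and> (rp k, i)\<in>rho"
proof -
  assume i: "i\<in>{1..n}"
  then have "rho_class n rho i \<in> rho_classes n rho" unfolding rho_classes_def by auto
  then obtain k where k: "k<m" "rho_class n rho i = v k" using classes_iff by auto
  have "(i, rp k)\<in>rho \<and> (rp k, i)\<in>rho" using rp[OF k(1)] class_eq[OF pre i, of "rp k"] k(2) by auto
  then show ?thesis using k(1) by blast
qed


definition Ar where "Ar p q \<longleftrightarrow> p<m \<and> q<m \<and> hasse_arrow n rho (v p) (v q)"

lemma Ar_le: "Ar p q \<Longrightarrow> le p q \<and> p \<noteq> q"
  unfolding Ar_def using arrow_iff by blast

lemma Ar_asym: "Ar p q \<Longrightarrow> \<not> Ar q p"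
  using Ar_le le_antisym Ar_def by blast

lemma Ar_hasse: "Ar p q \<Longrightarrow> r<m \<Longrightarrow> le p r \<Longrightarrow> le r q \<Longrightarrow> r = p \<or> r = q"
  unfolding Ar_def using arrow_iff by blast

lemma m0: "0 < m" using m3 by simp

lemma ex_lt_cong: "(\<And>k. k<(m::nat) \<Longrightarrow> P k = Q k) \<Longrightarrow> (\<exists>k<m. P k) = (\<exists>k<m. Q k)"
  by blast

lemma pair_inj: "p<m \<Longrightarrow> q<m \<Longrightarrow> k<m \<Longrightarrow> k'<m \<Longrightarrow>
   {v p, v q} = {v k, v k'} \<longleftrightarrow> {p,q} = {k,k'}"
proof -
  assume a: "p<m" "q<m" "k<m" "k'<m"
  note e1 = v_inj[OF a(1) a(3)] v_inj[OF a(1) a(4)] v_inj[OF a(2) a(3)] v_inj[OF a(2) a(4)]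
  show ?thesis unfolding doubleton_eq_iff e1 by (rule refl)
qed

lemma adj_idx: "p<m \<Longrightarrow> q<m \<Longrightarrow> (Ar p q \<or> Ar q p) \<longleftrightarrow> (\<exists>k<m. {p,q} = {k, Suc k mod m})"
proof -
  assume pq: "p<m" "q<m"
  have "(Ar p q \<or> Ar q p) \<longleftrightarrow> hasse_adj n rho (v p) (v q)"
    unfolding Ar_def hasse_adj_def using pq by blast
  also have "\<dots> \<longleftrightarrow> (\<exists>k<m. {v p, v q} = {v k, v (Suc k mod m)})" by (rule adj)
  also have "\<dots> \<longleftrightarrow> (\<exists>k<m. {p,q} = {k, Suc k mod m})"
  proof -
    have "\<And>k. k<m \<Longrightarrow> ({v p, v q} = {v k, v (Suc k mod m)}) = ({p,q} = {k, Suc k mod m})"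
      by (rule pair_inj[OF pq(1) pq(2) _ mod_less_divisor[OF m0]])
    then show ?thesis by (rule ex_lt_cong)
  qed
  finally show ?thesis .
qed

lemma edge: "k<m \<Longrightarrow> Ar k (Suc k mod m) \<or> Ar (Suc k mod m) k"
proof -
  assume k: "k<m"
  have sk: "Suc k mod m < m" using m0 by simp
  have x: "\<exists>k'<m. {k, Suc k mod m} = {k', Suc k' mod m}" by (rule exI[of _ k]) (simp add: k)
  show ?thesis using iffD2[OF adj_idx[OF k sk] x] .
qed

definition S where "S p q = {r. r<m \<and> le p r \<and> le r q}"

definition AR where "AR = {(p,q). Ar p q}"

lemma reach0: "\<forall>p q. card (S p q) = N \<longrightarrow> p<m \<longrightarrow> q<m \<longrightarrow> le p q \<longrightarrow> (p,q)\<in>AR\<^sup>*"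
proof (induction N rule: less_induct)
  case (less N)
  show ?case
  proof (intro allI impI)
    fix p q assume h: "card (S p q) = N" "p<m" "q<m" "le p q"
    show "(p,q)\<in>AR\<^sup>*"
    proof (cases "p = q \<or> Ar p q")
      case True
      then show ?thesis unfolding AR_def by auto
    next
      case False
      then have "\<not> hasse_arrow n rho (v p) (v q)" using h unfolding Ar_def by auto
      then obtain r where r: "r<m" "le p r" "le r q" "r\<noteq>p" "r\<noteq>q"
        using arrow_iff h False by blast
      have fin: "finite (S p q)" unfolding S_def by auto
      have s1: "S p r \<subset> S p q"
      proof
        show "S p r \<subseteq> S p q" unfolding S_def using le_trans r by auto
        have "q \<in> S p q" unfolding S_def using h le_refl by auto
        moreover have "q \<notin> S p r" unfolding S_def using le_antisym r h by auto
        ultimately show "S p r \<noteq> S p q" by blast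
      qed
      have s2: "S r q \<subset> S p q"
      proof
        show "S r q \<subseteq> S p q" unfolding S_def using le_trans r by auto
        have "p \<in> S p q" unfolding S_def using h le_refl by auto
        moreover have "p \<notin> S r q" unfolding S_def using le_antisym r h by auto
        ultimately show "S r q \<noteq> S p q" by blast
      qed
      have "card (S p r) < N" using psubset_card_mono[OF fin s1] h by simp
      then have a: "(p,r)\<in>AR\<^sup>*" using less h r by blast
      have "card (S r q) < N" using psubset_card_mono[OF fin s2] h by simp
      then have b: "(r,q)\<in>AR\<^sup>*" using less h r by blast
      show ?thesis using a b by simp
    qed
  qed
qed

lemma reach: "p<m \<Longrightarrow> q<m \<Longrightarrow> le p q \<Longrightarrow> (p,q)\<in>AR\<^sup>*"
  using reach0 by blast

lemma AR_le: "(p,q)\<in>AR\<^sup>* \<Longrightarrow> p<m \<Longrightarrow> le p q"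
proof (induction rule: rtrancl_induct)
  case base then show ?case using le_refl by simp
next
  case (step y z) then show ?case using Ar_le le_trans unfolding AR_def by blast
qed

end

locale cyce = cyc +
  assumes e: "Ar (m-1) 0"
  and sinks: "2 \<le> card (sink_vertices n rho)"
begin

definition AR' where "AR' = AR - {(m-1,0)}"

lemma AR_ins: "AR = insert (m-1,0) AR'"
  unfolding AR'_def using e unfolding AR_def by auto

definition LF where "LF p q \<longleftrightarrow> p \<le> q \<and> (\<forall>k. p \<le> k \<and> k < q \<longrightarrow> Ar k (Suc k))"
definition LB where "LB p q \<longleftrightarrow> q \<le> p \<and> (\<forall>k. q \<le> k \<and> k < p \<longrightarrow> \<not> Ar k (Suc k))"

lemma line: "(p,q)\<in>AR'\<^sup>* \<Longrightarrow> p<m \<Longrightarrow> q<m \<and> (LF p q \<or> LB p q)"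
proof (induction rule: rtrancl_induct)
  case base then show ?case unfolding LF_def by auto
next
  case (step q c)
  then have IH: "q<m" "LF p q \<or> LB p q" by auto
  have a: "Ar q c" "(q,c) \<noteq> (m-1,0)" using step(2) unfolding AR'_def AR_def by auto
  then have c: "c<m" unfolding Ar_def by simp
  obtain k where k: "k<m" "{q,c} = {k, Suc k mod m}" using adj_idx IH(1) c a(1) by blast
  show ?case
  proof (cases "k = m-1")
    case True
    then have "Suc k mod m = 0" using m0 by simp
    then have "(q,c) = (m-1,0) \<or> (q,c) = (0,m-1)" using k True unfolding doubleton_eq_iff by auto
    then show ?thesis using a e Ar_asym by auto
  next
    case False
    then have sk: "Suc k mod m = Suc k" "Suc k < m" using k by auto
    then have "(q = k \<and> c = Suc k) \<or> (q = Suc k \<and> c = k)" using k unfolding doubleton_eq_iff by auto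
    then show ?thesis
    proof
      assume qc: "q = k \<and> c = Suc k"
      then have F: "Ar k (Suc k)" using a by simp
      show ?thesis using IH(2)
      proof
        assume "LF p q" then have "LF p c" using qc F unfolding LF_def by (auto simp: less_Suc_eq)
        then show ?thesis using c by simp
      next
        assume "LB p q"
        then have "p = k" using qc F unfolding LB_def by (metis le_neq_implies_less order_refl)
        then have "LF p c" using qc F unfolding LF_def by (auto simp: less_Suc_eq)
        then show ?thesis using c by simp
      qed
    next
      assume qc: "q = Suc k \<and> c = k"
      then have F: "\<not> Ar k (Suc k)" using a Ar_asym by auto
      show ?thesis using IH(2)
      proof
        assume "LF p q"
        then have "p = Suc k" using qc F unfolding LF_def by (metis lessI not_less_eq_eq order_antisym_conv)
        then have "LB p c" using qc F unfolding LB_def by (auto simp: less_Suc_eq)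
        then show ?thesis using c by simp
      next
        assume "LB p q"
        then have "LB p c" using qc F unfolding LB_def
          by (auto, metis Suc_leI le_neq_implies_less)
        then show ?thesis using c by simp
      qed
    qed
  qed
qed

lemma LF_le: "LF p q \<Longrightarrow> q<m \<Longrightarrow> le p q"
proof (induction q)
  case 0 then show ?case unfolding LF_def using le_refl by simp
next
  case (Suc q)
  show ?case
  proof (cases "p = Suc q")
    case True then show ?thesis using le_refl Suc by simp
  next
    case False
    then have "LF p q" "Ar q (Suc q)" using Suc(2) unfolding LF_def by auto
    then show ?thesis using Suc Ar_le le_trans by auto
  qed
qed


lemma sink: assumes k: "k<m" and sv: "v k \<in> sink_vertices n rho"
  shows "\<not> Ar k (Suc k mod m) \<and> (0<k \<longrightarrow> Ar (k-1) k)"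
proof -
  have S: "\<And>b. hasse_adj n rho (v k) b \<Longrightarrow> hasse_arrow n rho b (v k)"
    using sv unfolding sink_vertices_def by blast
  have sk: "Suc k mod m < m" using m0 by simp
  have x: "\<exists>k'<m. {v k, v (Suc k mod m)} = {v k', v (Suc k' mod m)}" by (rule exI[of _ k]) (simp add: k)
  have "hasse_adj n rho (v k) (v (Suc k mod m))" using iffD2[OF adj x] .
  then have "Ar (Suc k mod m) k" using S k sk unfolding Ar_def by blast
  then have 1: "\<not> Ar k (Suc k mod m)" using Ar_asym by blast
  have 2: "Ar (k-1) k" if kp: "0<k"
  proof -
    have e1: "Suc (k-1) mod m = k" using kp k by simp
    have km: "k-1 < m" using k by simp
    have x: "\<exists>k'<m. {v k, v (k-1)} = {v k', v (Suc k' mod m)}"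
      by (rule exI[of _ "k-1"]) (unfold e1, insert k, simp add: insert_commute)
    have "hasse_adj n rho (v k) (v (k-1))" using iffD2[OF adj x] .
    then show ?thesis using S k km unfolding Ar_def by blast
  qed
  show ?thesis using 1 2 by blast
qed

lemma AR'_le: "(a,b)\<in>AR'\<^sup>* \<Longrightarrow> a<m \<Longrightarrow> le a b"
proof -
  assume h: "(a,b)\<in>AR'\<^sup>*" "a<m"
  have "AR' \<subseteq> AR" unfolding AR'_def by blast
  then have "(a,b)\<in>AR\<^sup>*" using h rtrancl_mono by blast
  then show ?thesis using AR_le h by blast
qed

lemma P1:
  assumes xyz: "x<m" "y<m" "z<m" and h: "le x y" "le y z" "le x (m-1)" "le 0 z"
  shows "le y (m-1) \<or> le 0 y"
proof (rule ccontr)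
  assume nn: "\<not> (le y (m-1) \<or> le 0 y)"
  have R: "AR\<^sup>* = AR'\<^sup>* \<union> {(a,b). (a,m-1)\<in>AR'\<^sup>* \<and> (0,b)\<in>AR'\<^sup>*}"
    by (simp add: AR_ins rtrancl_insert)
  have mm: "m-1<m" "0<m" using m3 by auto
  have "(x,y)\<in>AR\<^sup>*" using reach xyz h by blast
  then have xy: "(x,y)\<in>AR'\<^sup>*" using R AR'_le nn mm by blast
  have "(y,z)\<in>AR\<^sup>*" using reach xyz h by blast
  then have yz: "(y,z)\<in>AR'\<^sup>*" using R AR'_le nn xyz by blast
  have "(x,m-1)\<in>AR\<^sup>*" using reach xyz h mm by blast
  then have xa: "(x,m-1)\<in>AR'\<^sup>*" using R by blast
  have "(0,z)\<in>AR\<^sup>*" using reach xyz h mm by blast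
  then have bz: "(0,z)\<in>AR'\<^sup>*" using R by blast
  have LFx: "LF x (m-1)"
  proof -
    have "LF x (m-1) \<or> LB x (m-1)" using line xa xyz by blast
    moreover have "LB x (m-1) \<Longrightarrow> x = m-1" unfolding LB_def using xyz by auto
    moreover have "LF (m-1) (m-1)" unfolding LF_def by auto
    ultimately show ?thesis by auto
  qed
  have LFz: "LF 0 z"
  proof -
    have "LF 0 z \<or> LB 0 z" using line bz mm by blast
    moreover have "LB 0 z \<Longrightarrow> z = 0" unfolding LB_def by auto
    moreover have "LF 0 0" unfolding LF_def by auto
    ultimately show ?thesis by auto
  qed
  have LBxy: "LB x y"
  proof -
    have "LF x y \<or> LB x y" using line xy xyz by blast
    moreover have "\<not> LF x y"
    proof
      assume "LF x y"
      then have "LF y (m-1)" using LFx xyz unfolding LF_def by auto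
      then show False using LF_le nn mm by blast
    qed
    ultimately show ?thesis by blast
  qed
  have LByz: "LB y z"
  proof -
    have "LF y z \<or> LB y z" using line yz xyz by blast
    moreover have "\<not> LF y z"
    proof
      assume "LF y z"
      then have "LF 0 y" using LFz xyz unfolding LF_def by auto
      then show False using LF_le nn xyz by blast
    qed
    ultimately show ?thesis by blast
  qed
  have bk: "\<And>j. z \<le> j \<Longrightarrow> j < x \<Longrightarrow> \<not> Ar j (Suc j)"
    using LBxy LByz unfolding LB_def by (meson not_le)
  have "sink_vertices n rho \<subseteq> {v z}"
  proof
    fix a assume a: "a \<in> sink_vertices n rho"
    then have "a \<in> rho_classes n rho" unfolding sink_vertices_def by blast
    then obtain k where k: "k<m" "a = v k" using classes_iff by blast
    have sk: "\<not> Ar k (Suc k mod m) \<and> (0<k \<longrightarrow> Ar (k-1) k)" using sink k a by blast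
    have "k \<noteq> m-1"
    proof
      assume "k = m-1"
      then have "Suc k mod m = 0" using mm by simp
      then show False using sk e \<open>k = m-1\<close> by simp
    qed
    then have k1: "k < m-1" using k by simp
    then have "Suc k mod m = Suc k" by simp
    then have nk: "\<not> Ar k (Suc k)" using sk by simp
    have "\<not> k < z" using LFz nk unfolding LF_def by auto
    moreover have "\<not> x \<le> k" using LFx nk k1 unfolding LF_def by auto
    ultimately have zk: "z \<le> k" "k < x" by auto
    have "k = z"
    proof (rule ccontr)
      assume "k \<noteq> z"
      then have "0 < k" "z \<le> k-1" "k-1 < x" using zk by auto
      then show False using bk sk by (metis Suc_pred')
    qed
    then show "a \<in> {v z}" using k by simp
  qed
  then have "card (sink_vertices n rho) \<le> 1"
  proof -
    have "card (sink_vertices n rho) \<le> card {v z}" by (rule card_mono) (auto simp: \<open>sink_vertices n rho \<subseteq> {v z}\<close>)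
    then show ?thesis by simp
  qed
  then show False using sinks by simp
qed


lemma mm: "m-1<m" "0<m" "m-1 \<noteq> 0" using m3 by auto

lemma e_le: "le (m-1) 0" using e Ar_le by blast

lemma elemP1:
  assumes ij: "(i,j)\<in>rho" and jr: "(j,r)\<in>rho" and ia: "(i,rp (m-1))\<in>rho" and br: "(rp 0,r)\<in>rho"
  shows "(j,rp (m-1))\<in>rho \<or> (rp 0,j)\<in>rho"
proof -
  have i: "i\<in>{1..n}" using pre_sub[OF pre ij] by simp
  have j: "j\<in>{1..n}" using pre_sub[OF pre ij] by simp
  have r: "r\<in>{1..n}" using pre_sub[OF pre jr] by simp
  obtain x where x: "x<m" "(i, rp x)\<in>rho" "(rp x, i)\<in>rho" using elem_idx[OF i] by blast
  obtain y where y: "y<m" "(j, rp y)\<in>rho" "(rp y, j)\<in>rho" using elem_idx[OF j] by blast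
  obtain z where z: "z<m" "(r, rp z)\<in>rho" "(rp z, r)\<in>rho" using elem_idx[OF r] by blast
  note tr = pre_trans[OF pre]
  have "le x y" unfolding le_def by (rule tr[OF tr[OF x(3) ij] y(2)])
  moreover have "le y z" unfolding le_def by (rule tr[OF tr[OF y(3) jr] z(2)])
  moreover have "le x (m-1)" unfolding le_def by (rule tr[OF x(3) ia])
  moreover have "le 0 z" unfolding le_def by (rule tr[OF br z(2)])
  ultimately have "le y (m-1) \<or> le 0 y" by (rule P1[OF x(1) y(1) z(1)])
  then show ?thesis
  proof
    assume "le y (m-1)" then have "(j, rp (m-1))\<in>rho" unfolding le_def by (rule tr[OF y(2)])
    then show ?thesis ..
  next
    assume "le 0 y" then have "(rp 0, j)\<in>rho" unfolding le_def by (rule tr[OF _ y(3)])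
    then show ?thesis ..
  qed
qed

lemma notboth: "(j,rp (m-1))\<in>rho \<Longrightarrow> (rp 0,j)\<in>rho \<Longrightarrow> False"
proof -
  assume a: "(j,rp (m-1))\<in>rho" "(rp 0,j)\<in>rho"
  have "le 0 (m-1)" unfolding le_def by (rule pre_trans[OF pre a(2) a(1)])
  then have "0 = m-1" by (rule le_antisym[OF mm(2) mm(1) _ e_le])
  then show False using mm(3) by simp
qed

lemma grp_eq: "group G \<Longrightarrow> a \<in> carrier G \<Longrightarrow> b \<in> carrier G \<Longrightarrow> a \<otimes>\<^bsub>G\<^esub> inv\<^bsub>G\<^esub> b = \<one>\<^bsub>G\<^esub> \<Longrightarrow> a = b"
proof -
  assume G: "group G" and a: "a \<in> carrier G" and b: "b \<in> carrier G" and h: "a \<otimes>\<^bsub>G\<^esub> inv\<^bsub>G\<^esub> b = \<one>\<^bsub>G\<^esub>"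
  have ib: "inv\<^bsub>G\<^esub> b \<in> carrier G" by (rule group.inv_closed[OF G b])
  have "inv\<^bsub>G\<^esub> (inv\<^bsub>G\<^esub> b) = a" by (rule group.inv_equality[OF G h ib a])
  then show "a = b" using group.inv_inv[OF G b] by simp
qed

lemma core:
  assumes G: "group G" and g: "g \<in> carrier G" "g \<noteq> \<one>\<^bsub>G\<^esub>"
  shows "\<exists>u. transitive_fun G rho u \<and> \<not> trivial_tfun G n rho u"
proof -
  define A where "A i j \<longleftrightarrow> (i,rp (m-1))\<in>rho \<and> (rp 0,j)\<in>rho" for i j
  define u where "u i j = (if A i j then g else \<one>\<^bsub>G\<^esub>)" for i j
  have one: "\<one>\<^bsub>G\<^esub> \<in> carrier G" by (rule monoid.one_closed[OF group.is_monoid[OF G]])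
  have l1: "\<one>\<^bsub>G\<^esub> \<otimes>\<^bsub>G\<^esub> g = g" "g \<otimes>\<^bsub>G\<^esub> \<one>\<^bsub>G\<^esub> = g"
     "\<one>\<^bsub>G\<^esub> \<otimes>\<^bsub>G\<^esub> \<one>\<^bsub>G\<^esub> = \<one>\<^bsub>G\<^esub>"
    by (rule monoid.l_one[OF group.is_monoid[OF G] g(1)], rule monoid.r_one[OF group.is_monoid[OF G] g(1)],
        rule monoid.l_one[OF group.is_monoid[OF G] one])
  note tr = pre_trans[OF pre]
  have T: "transitive_fun G rho u"
    unfolding transitive_fun_def
  proof (intro conjI allI impI)
    fix i j assume "(i,j)\<in>rho" then show "u i j \<in> carrier G" unfolding u_def using g one by simp
  next
    fix i j r assume ij: "(i,j)\<in>rho" and jr: "(j,r)\<in>rho"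
    show "u i j \<otimes>\<^bsub>G\<^esub> u j r = u i r"
    proof (cases "A i r")
      case True
      then have Air: "(i,rp (m-1))\<in>rho" "(rp 0,r)\<in>rho" unfolding A_def by auto
      have "(j,rp (m-1))\<in>rho \<or> (rp 0,j)\<in>rho" using elemP1[OF ij jr Air] .
      then show ?thesis
      proof
        assume ja: "(j,rp (m-1))\<in>rho"
        then have "A j r" "\<not> A i j" unfolding A_def using Air notboth by auto
        then show ?thesis unfolding u_def using True l1 by simp
      next
        assume jb: "(rp 0,j)\<in>rho"
        then have "\<not> A j r" "A i j" unfolding A_def using Air notboth by auto
        then show ?thesis unfolding u_def using True l1 by simp
      qed
    next
      case False
      have "\<not> A i j"
      proof
        assume "A i j" then have "A i r" unfolding A_def using tr[OF _ jr] by blast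
        then show False using False by simp
      qed
      moreover have "\<not> A j r"
      proof
        assume "A j r" then have "A i r" unfolding A_def using tr[OF ij] by blast
        then show False using False by simp
      qed
      ultimately show ?thesis unfolding u_def using False l1 by simp
    qed
  qed
  have NT: "\<not> trivial_tfun G n rho u"
  proof
    assume "trivial_tfun G n rho u"
    then obtain h where hc: "\<And>i. i\<in>{1..n} \<Longrightarrow> h i \<in> carrier G"
      and hu: "\<And>i j. (i,j)\<in>rho \<Longrightarrow> u i j = h i \<otimes>\<^bsub>G\<^esub> inv\<^bsub>G\<^esub> (h j)"
      unfolding trivial_tfun_def by blast
    have hrp: "\<And>k. k<m \<Longrightarrow> h (rp k) \<in> carrier G" using hc rp by blast
    have stp: "h (rp k) = h (rp (Suc k))" if k: "k < m-1" for k
    proof -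
      have k1: "k<m" "Suc k < m" "Suc k mod m = Suc k" using k by auto
      have "Ar k (Suc k) \<or> Ar (Suc k) k" using edge[OF k1(1)] k1(3) by simp
      then show ?thesis
      proof
        assume a: "Ar k (Suc k)"
        have nA: "\<not> A (rp k) (rp (Suc k))"
        proof
          assume "A (rp k) (rp (Suc k))"
          then have l: "le k (m-1)" "le 0 (Suc k)" unfolding A_def le_def by auto
          then have "le (m-1) (Suc k)" using e_le le_trans by blast
          then have "m-1 = k \<or> m-1 = Suc k" using Ar_hasse[OF a mm(1) l(1)] by blast
          then have "m-1 = Suc k" using k by simp
          then have "0 = m-1" using le_antisym[OF mm(2) mm(1) _ e_le] l(2) by simp
          then show False using mm(3) by simp
        qed
        have "(rp k, rp (Suc k))\<in>rho" using Ar_le[OF a] unfolding le_def by blast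
        then have "u (rp k) (rp (Suc k)) = h (rp k) \<otimes>\<^bsub>G\<^esub> inv\<^bsub>G\<^esub> (h (rp (Suc k)))" by (rule hu)
        then have "\<one>\<^bsub>G\<^esub> = h (rp k) \<otimes>\<^bsub>G\<^esub> inv\<^bsub>G\<^esub> (h (rp (Suc k)))"
          using nA unfolding u_def by simp
        then show ?thesis using grp_eq[OF G hrp[OF k1(1)] hrp[OF k1(2)]] by simp
      next
        assume a: "Ar (Suc k) k"
        have nA: "\<not> A (rp (Suc k)) (rp k)"
        proof
          assume "A (rp (Suc k)) (rp k)"
          then have l: "le (Suc k) (m-1)" "le 0 k" unfolding A_def le_def by auto
          then have "le (m-1) k" using e_le le_trans by blast
          then have "m-1 = Suc k \<or> m-1 = k" using Ar_hasse[OF a mm(1) l(1)] by blast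
          then have mk: "m-1 = Suc k" using k by simp
          have "le (Suc k) 0" using l(1) e_le le_trans by blast
          then have "0 = Suc k \<or> 0 = k" using Ar_hasse[OF a mm(2)] l(2) by blast
          then have "k = 0" by simp
          then show False using mk m3 by simp
        qed
        have "(rp (Suc k), rp k)\<in>rho" using Ar_le[OF a] unfolding le_def by blast
        then have "u (rp (Suc k)) (rp k) = h (rp (Suc k)) \<otimes>\<^bsub>G\<^esub> inv\<^bsub>G\<^esub> (h (rp k))" by (rule hu)
        then have "\<one>\<^bsub>G\<^esub> = h (rp (Suc k)) \<otimes>\<^bsub>G\<^esub> inv\<^bsub>G\<^esub> (h (rp k))"
          using nA unfolding u_def by simp
        then show ?thesis using grp_eq[OF G hrp[OF k1(2)] hrp[OF k1(1)]] by simp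
      qed
    qed
    have all: "k<m \<Longrightarrow> h (rp k) = h (rp 0)" for k
    proof (induction k)
      case 0 then show ?case by simp
    next
      case (Suc k) then show ?case using stp[of k] by simp
    qed
    have e0: "(rp (m-1), rp 0)\<in>rho" using e_le unfolding le_def .
    have "A (rp (m-1)) (rp 0)" unfolding A_def using le_refl[OF mm(1)] le_refl[OF mm(2)] unfolding le_def by blast
    then have "g = u (rp (m-1)) (rp 0)" unfolding u_def by simp
    also have "\<dots> = h (rp (m-1)) \<otimes>\<^bsub>G\<^esub> inv\<^bsub>G\<^esub> (h (rp 0))" by (rule hu[OF e0])
    also have "\<dots> = \<one>\<^bsub>G\<^esub>" using all[OF mm(1)] group.r_inv[OF G hrp[OF mm(2)]] by simp
    finally show False using g by simp
  qed
  show ?thesis using T NT by blast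
qed

end

lemma grp_eq': "group G \<Longrightarrow> a \<in> carrier G \<Longrightarrow> b \<in> carrier G \<Longrightarrow> a \<otimes>\<^bsub>G\<^esub> inv\<^bsub>G\<^esub> b = \<one>\<^bsub>G\<^esub> \<Longrightarrow> a = b"
proof -
  assume G: "group G" and a: "a \<in> carrier G" and b: "b \<in> carrier G" and h: "a \<otimes>\<^bsub>G\<^esub> inv\<^bsub>G\<^esub> b = \<one>\<^bsub>G\<^esub>"
  have ib: "inv\<^bsub>G\<^esub> b \<in> carrier G" by (rule group.inv_closed[OF G b])
  have "inv\<^bsub>G\<^esub> (inv\<^bsub>G\<^esub> b) = a" by (rule group.inv_equality[OF G h ib a])
  then show "a = b" using group.inv_inv[OF G b] by simp
qed

lemma cyc_refl:
  assumes C: "cyc n rho m v"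
  shows "cyc n rho m (\<lambda>k. v (m-1-k))"
proof -
  have pre: "is_preorder_on n rho" and m3: "m \<ge> 3" and bij: "bij_betw v {0..<m} (rho_classes n rho)"
    and adj: "\<And>a b. hasse_adj n rho a b \<longleftrightarrow> (\<exists>k<m. {a,b} = {v k, v (Suc k mod m)})"
    using C unfolding cyc_def by auto
  have f: "bij_betw (\<lambda>k. m-1-k) {0..<m} {0..<m}"
    by (rule bij_betw_byWitness[where f'="\<lambda>k. m-1-k"]) auto
  have bij': "bij_betw (\<lambda>k. v (m-1-k)) {0..<m} (rho_classes n rho)"
    using bij_betw_trans[OF f bij] by (simp add: o_def)
  have adj': "hasse_adj n rho a b \<longleftrightarrow> (\<exists>k<m. {a,b} = {v (m-1-k), v (m-1-(Suc k mod m))})" for a b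
  proof -
    have "(\<exists>k<m. {a,b} = {v k, v (Suc k mod m)}) \<longleftrightarrow> (\<exists>k<m. {a,b} = {v (m-1-k), v (m-1-(Suc k mod m))})"
    proof
      assume "\<exists>k<m. {a,b} = {v k, v (Suc k mod m)}"
      then obtain k where k: "k<m" "{a,b} = {v k, v (Suc k mod m)}" by blast
      show "\<exists>k<m. {a,b} = {v (m-1-k), v (m-1-(Suc k mod m))}"
      proof (cases "k = m-1")
        case True
        have e1: "Suc k mod m = 0" "m-1-0 = k" "m - 1 - (Suc (m-1) mod m) = m-1" using True m3 by auto
        have k2: "{a,b} = {v (m-1), v 0}" using k(2) e1(1) True by simp
        have k3: "{v (m-1-(m-1)), v (m-1-(Suc (m-1) mod m))} = {v 0, v (m-1)}" using e1(3) by simp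
        have "{a,b} = {v (m-1-(m-1)), v (m-1-(Suc (m-1) mod m))}"
          unfolding k2 k3 by (rule insert_commute)
        then show ?thesis using m3 by (intro exI[of _ "m-1"]) simp
      next
        case False
        define k' where "k' = m-2-k"
        have e1: "Suc k mod m = Suc k" "m-1-k' = Suc k" "m-1-(Suc k' mod m) = k" "k' < m"
          using False k(1) m3 unfolding k'_def by auto
        have "{a,b} = {v (m-1-k'), v (m-1-(Suc k' mod m))}"
          using k(2) unfolding e1 by (simp add: insert_commute)
        then show ?thesis using e1(4) by (intro exI[of _ k']) simp
      qed
    next
      assume "\<exists>k<m. {a,b} = {v (m-1-k), v (m-1-(Suc k mod m))}"
      then obtain k where k: "k<m" "{a,b} = {v (m-1-k), v (m-1-(Suc k mod m))}" by blast
      show "\<exists>k<m. {a,b} = {v k, v (Suc k mod m)}"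
      proof (cases "k = m-1")
        case True
        have e1: "m-1-k = 0" "m-1-(Suc k mod m) = m-1" "Suc (m-1) mod m = 0" using True m3 by auto
        have "{a,b} = {v (m-1), v (Suc (m-1) mod m)}"
          using k(2) unfolding e1 by (simp add: insert_commute)
        then show ?thesis using m3 by (intro exI[of _ "m-1"]) simp
      next
        case False
        define k' where "k' = m-2-k"
        have e1: "m-1-k = Suc k'" "m-1-(Suc k mod m) = k'" "Suc k' mod m = Suc k'" "k' < m"
          using False k(1) m3 unfolding k'_def by auto
        have "{a,b} = {v k', v (Suc k' mod m)}"
          using k(2) unfolding e1 by (simp add: insert_commute)
        then show ?thesis using e1(4) by (intro exI[of _ k']) simp
      qed
    qed
    then show ?thesis using adj by simp
  qed
  show ?thesis unfolding cyc_def using pre m3 bij' adj' by blast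
qed

lemma general:
  assumes pre: "is_preorder_on n rho" and cy: "hasse_is_cycle n rho"
    and sk: "card (sink_vertices n rho) \<ge> 2"
    and G: "group G" and g: "g \<in> carrier G" "g \<noteq> \<one>\<^bsub>G\<^esub>"
  shows "\<exists>u. transitive_fun G rho u \<and> \<not> trivial_tfun G n rho u"
proof -
  obtain m v where mv: "m \<ge> 3" "bij_betw v {0..<m} (rho_classes n rho)"
    "\<And>a b. hasse_adj n rho a b \<longleftrightarrow> (\<exists>k<m. {a,b} = {v k, v (Suc k mod m)})"
    using cy unfolding hasse_is_cycle_def by blast
  have C: "cyc n rho m v" unfolding cyc_def using pre mv by blast
  have mm: "m-1 < m" "0 < m" "Suc (m-1) mod m = 0" using mv(1) by auto
  have "cyc.Ar n rho m v (m-1) (Suc (m-1) mod m) \<or> cyc.Ar n rho m v (Suc (m-1) mod m) (m-1)"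
    by (rule cyc.edge[OF C mm(1)])
  then have "cyc.Ar n rho m v (m-1) 0 \<or> cyc.Ar n rho m v 0 (m-1)" unfolding mm(3) .
  then show ?thesis
  proof
    assume "cyc.Ar n rho m v (m-1) 0"
    then have "cyce n rho m v" unfolding cyce_def cyce_axioms_def using C sk by blast
    then show ?thesis using cyce.core[OF _ G g] by blast
  next
    assume a: "cyc.Ar n rho m v 0 (m-1)"
    define w where "w = (\<lambda>k. v (m-1-k))"
    have C': "cyc n rho m w" unfolding w_def by (rule cyc_refl[OF C])
    have "hasse_arrow n rho (v 0) (v (m-1))" using a unfolding cyc.Ar_def[OF C] by blast
    then have "hasse_arrow n rho (w (m-1)) (w 0)" unfolding w_def by simp
    then have "cyc.Ar n rho m w (m-1) 0" unfolding cyc.Ar_def[OF C'] using mm by blast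
    then have "cyce n rho m w" unfolding cyce_def cyce_axioms_def using C' sk by blast
    then show ?thesis using cyce.core[OF _ G g] by blast
  qed
qed

lemma example:
  assumes G: "group G" and g: "g \<in> carrier G" "g \<noteq> \<one>\<^bsub>G\<^esub>"
  shows "\<exists>u. transitive_fun G rho_example u \<and> \<not> trivial_tfun G 4 rho_example u"
proof -
  define u where "u i j = (if i = 1 \<and> j = (3::nat) then g else \<one>\<^bsub>G\<^esub>)" for i j :: nat
  have one: "\<one>\<^bsub>G\<^esub> \<in> carrier G" by (rule monoid.one_closed[OF group.is_monoid[OF G]])
  have l1: "\<one>\<^bsub>G\<^esub> \<otimes>\<^bsub>G\<^esub> g = g" "g \<otimes>\<^bsub>G\<^esub> \<one>\<^bsub>G\<^esub> = g"
     "\<one>\<^bsub>G\<^esub> \<otimes>\<^bsub>G\<^esub> \<one>\<^bsub>G\<^esub> = \<one>\<^bsub>G\<^esub>"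
    by (rule monoid.l_one[OF group.is_monoid[OF G] g(1)], rule monoid.r_one[OF group.is_monoid[OF G] g(1)],
        rule monoid.l_one[OF group.is_monoid[OF G] one])
  have T: "transitive_fun G rho_example u"
    unfolding transitive_fun_def
  proof (intro conjI allI impI)
    fix i j assume "(i,j)\<in>rho_example" then show "u i j \<in> carrier G" unfolding u_def using g one by simp
  next
    fix i j r assume "(i,j)\<in>rho_example" "(j,r)\<in>rho_example"
    then show "u i j \<otimes>\<^bsub>G\<^esub> u j r = u i r" unfolding rho_example_def u_def using l1 by auto
  qed
  have NT: "\<not> trivial_tfun G 4 rho_example u"
  proof
    assume "trivial_tfun G 4 rho_example u"
    then obtain h where hc: "\<And>i. i\<in>{1..4} \<Longrightarrow> h i \<in> carrier G"
      and hu: "\<And>i j. (i,j)\<in>rho_example \<Longrightarrow> u i j = h i \<otimes>\<^bsub>G\<^esub> inv\<^bsub>G\<^esub> (h j)"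
      unfolding trivial_tfun_def by blast
    have c: "h 1 \<in> carrier G" "h 2 \<in> carrier G" "h 3 \<in> carrier G" "h 4 \<in> carrier G" using hc by auto
    have r: "(1,3)\<in>rho_example" "(1,4)\<in>rho_example" "(2,3)\<in>rho_example" "(2,4)\<in>rho_example"
      unfolding rho_example_def by auto
    have u: "u 1 3 = g" "u 1 4 = \<one>\<^bsub>G\<^esub>" "u 2 3 = \<one>\<^bsub>G\<^esub>" "u 2 4 = \<one>\<^bsub>G\<^esub>"
      unfolding u_def by auto
    have "h 1 = h 4" using grp_eq'[OF G c(1) c(4)] hu[OF r(2)] u(2) by simp
    moreover have "h 2 = h 4" using grp_eq'[OF G c(2) c(4)] hu[OF r(4)] u(4) by simp
    moreover have "h 2 = h 3" using grp_eq'[OF G c(2) c(3)] hu[OF r(3)] u(3) by simp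
    ultimately have "h 1 = h 3" by simp
    then have "g = h 3 \<otimes>\<^bsub>G\<^esub> inv\<^bsub>G\<^esub> (h 3)" using hu[OF r(1)] u(1) by simp
    then have "g = \<one>\<^bsub>G\<^esub>" using group.r_inv[OF G c(3)] by simp
    then show False using g by simp
  qed
  show ?thesis using T NT by blast
qed

theorem mainTheorem14:
  shows "(\<forall>(n::nat) rho. is_preorder_on n rho \<longrightarrow> hasse_is_cycle n rho \<longrightarrow>
            card (sink_vertices n rho) \<ge> 2 \<longrightarrow>
            (\<forall>G :: ('g, 'b) monoid_scheme. group G \<longrightarrow> carrier G \<noteq> {\<one>\<^bsub>G\<^esub>} \<longrightarrow>
               (\<exists>u. transitive_fun G rho u \<and> \<not> trivial_tfun G n rho u)))
       \<and> (\<forall>G :: ('g, 'b) monoid_scheme. group G \<longrightarrow> carrier G \<noteq> {\<one>\<^bsub>G\<^esub>} \<longrightarrow>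
            (\<exists>u. transitive_fun G rho_example u \<and> \<not> trivial_tfun G 4 rho_example u))"
proof -
  have ex: "\<exists>g. g \<in> carrier G \<and> g \<noteq> \<one>\<^bsub>G\<^esub>" if "group G" "carrier G \<noteq> {\<one>\<^bsub>G\<^esub>}"
    for G :: "('g, 'b) monoid_scheme"
  proof -
    have "\<one>\<^bsub>G\<^esub> \<in> carrier G" by (rule monoid.one_closed[OF group.is_monoid[OF that(1)]])
    then show ?thesis using that(2) by blast
  qed
  show ?thesis
  proof (intro conjI allI impI)
    fix n rho and G :: "('g, 'b) monoid_scheme"
    assume a: "is_preorder_on n rho" "hasse_is_cycle n rho" "card (sink_vertices n rho) \<ge> 2"
      "group G" "carrier G \<noteq> {\<one>\<^bsub>G\<^esub>}"
    then obtain g where "g \<in> carrier G" "g \<noteq> \<one>\<^bsub>G\<^esub>" using ex by blast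
    then show "\<exists>u. transitive_fun G rho u \<and> \<not> trivial_tfun G n rho u"
      using general[OF a(1-4)] by blast
  next
    fix G :: "('g, 'b) monoid_scheme"
    assume a: "group G" "carrier G \<noteq> {\<one>\<^bsub>G\<^esub>}"
    then obtain g where "g \<in> carrier G" "g \<noteq> \<one>\<^bsub>G\<^esub>" using ex by blast
    then show "\<exists>u. transitive_fun G rho_example u \<and> \<not> trivial_tfun G 4 rho_example u"
      using example[OF a(1)] by blast
  qed
qed

end
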